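(* For all nonnegative integers $n$ and $k$ with $k\le n$, $$W_{m,r}[n,k]_q=\sum_{j=0}^{n-k}(-1)^{j}\,q^{-r-m(k+j)}\,\frac{r_{k+j+1,q}}{r_{k+1,q}}\,W_{m,r}[n+1,k+j+1]_q ,$$ where $r_{i,q}=\prod_{h=1}^{i-1}q^{-r-mh+m}[mh+r]_q$, so that $\frac{r_{k+j+1,q}}{r_{k+1,q}}$ stands for $\prod_{h=k+1}^{k+j}q^{-r-mh+m}[mh+r]_q$ (equal to $1$ when $j=0$).
   Context: Fix a real number $q>0$ with $q\neq 1$, a positive integer $m$ and a complex number $r$. For complex $x$ put $q^x=e^{x\ln q}$ and $[x]_q=\frac{1-q^x}{1-q}$. The numbers $W_{m,r}[n,k]_q$ (a $q$-analogue of the $r$-Whitney numbers of the second kind), for integers $n,k$, are defined by $W_{m,r}[0,0]_q=1$, $W_{m,r}[n,k]_q=0$ whenever $n<k$ or $n<0$ or $k<0$, and, for $n\ge 1$ and $0\le k\le n$, $$W_{m,r}[n,k]_q=q^{m(k-1)+r}\,W_{m,r}[n-1,k-1]_q+[mk+r]_q\,W_{m,r}[n-1,k]_q .$$ *)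

theory Defs
  imports Complex_Main
begin

definition qpow :: "real \<Rightarrow> complex \<Rightarrow> complex" where
  "qpow q x = exp (x * of_real (ln q))"

definition qint :: "real \<Rightarrow> complex \<Rightarrow> complex" where
  "qint q x = (1 - qpow q x) / (1 - of_real q)"

text \<open>q-analogue of the r-Whitney numbers of the second kind, W_{m,r}[n,k]_q, for
  nonnegative n, k (values at negative indices are 0 by definition and enter the
  recursion only as the vanishing term for k = 0).\<close>
fun qW :: "real \<Rightarrow> nat \<Rightarrow> complex \<Rightarrow> nat \<Rightarrow> nat \<Rightarrow> complex" where
  "qW q m r 0 0 = 1"
| "qW q m r 0 (Suc k) = 0"
| "qW q m r (Suc n) 0 = qint q r * qW q m r n 0"
| "qW q m r (Suc n) (Suc k) =
     qpow q (of_nat (m * k) + r) * qW q m r n k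
     + qint q (of_nat (m * Suc k) + r) * qW q m r n (Suc k)"

end

theory Submission
  imports Defs
begin

lemma qpow_add: "qpow q (a + b) = qpow q a * qpow q b"
  by (simp add: qpow_def distrib_right exp_add)

lemma qpow_neg: "qpow q (- a) * qpow q a = 1"
  by (simp add: qpow_def exp_minus)

lemma qW_zero: "n < k \<Longrightarrow> qW q m r n k = 0"
proof (induction n arbitrary: k)
  case 0 then show ?case by (cases k) auto
next
  case (Suc n) then show ?case by (cases k) auto
qed

lemma qW_inv: "qW q m r n k = qpow q (- r - of_nat (m * k)) *
   (qW q m r (Suc n) (Suc k) - qint q (of_nat (m * Suc k) + r) * qW q m r n (Suc k))"
proof -
  have "qW q m r (Suc n) (Suc k) - qint q (of_nat (m * Suc k) + r) * qW q m r n (Suc k)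
        = qpow q (of_nat (m * k) + r) * qW q m r n k" by simp
  moreover have "qpow q (- r - of_nat (m * k)) * qpow q (of_nat (m * k) + r) = 1"
    using qpow_neg[of q "of_nat (m * k) + r"] by (simp add: algebra_simps)
  ultimately show ?thesis by (metis mult.assoc mult_1)
qed

theorem theorem1:
  fixes q :: real and m :: nat and r :: complex and n k :: nat
  assumes "q > 0" and "q \<noteq> 1" and "m > 0" and "k \<le> n"
  shows "qW q m r n k =
    (\<Sum>j = 0..n - k. (-1) ^ j * qpow q (- r - of_nat (m * (k + j)))
       * (\<Prod>h = k + 1..k + j. qpow q (- r - of_nat (m * h) + of_nat m)
            * qint q (of_nat (m * h) + r))
       * qW q m r (n + 1) (k + j + 1))"
proof -
  define f where "f h = qpow q (- r - of_nat (m * h) + of_nat m) * qint q (of_nat (m * h) + r)" for h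
  define S where "S k = (\<Sum>j = 0..n - k. (-1) ^ j * qpow q (- r - of_nat (m * (k + j)))
       * (\<Prod>h = k + 1..k + j. f h) * qW q m r (n + 1) (k + j + 1))" for k
  have main: "\<forall>k. n - k = d \<longrightarrow> k \<le> n \<longrightarrow> qW q m r n k = S k" for d
  proof (induction d)
    case 0
    show ?case
    proof (intro allI impI)
      fix k assume "n - k = 0" "k \<le> n"
      then have kn: "k = n" by simp
      have "S k = qpow q (- r - of_nat (m * n)) * qW q m r (Suc n) (Suc n)"
        by (simp add: S_def kn)
      also have "\<dots> = qW q m r n n"
        using qW_inv[of q m r n n] qW_zero[of n "Suc n" q m r] by simp
      finally show "qW q m r n k = S k" using kn by simp
    qed
  next
    case (Suc d)
    show ?case
    proof (intro allI impI)
      fix k assume a: "n - k = Suc d" "k \<le> n"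
      then have kn: "Suc k \<le> n" "n - Suc k = d" by auto
      have IH: "qW q m r n (Suc k) = S (Suc k)" using Suc.IH kn by blast
      define c where "c = qpow q (- r - of_nat (m * k))"
      define g where "g j = (-1) ^ j * qpow q (- r - of_nat (m * (k + j)))
       * (\<Prod>h = k + 1..k + j. f h) * qW q m r (n + 1) (k + j + 1)" for j
      have fk: "f (Suc k) = c * qint q (of_nat (m * Suc k) + r)"
        by (simp add: f_def c_def algebra_simps)
      have gS: "g (Suc j) = - (c * qint q (of_nat (m * Suc k) + r)) *
          ((-1) ^ j * qpow q (- r - of_nat (m * (Suc k + j)))
           * (\<Prod>h = Suc k + 1..Suc k + j. f h) * qW q m r (n + 1) (Suc k + j + 1))" for j
      proof -
        have "(\<Prod>h = k + 1..k + Suc j. f h) = f (Suc k) * (\<Prod>h = Suc k + 1..Suc k + j. f h)"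
          using prod.atLeast_Suc_atMost[of "k+1" "k + Suc j" f] by simp
        then show ?thesis unfolding g_def fk by (simp add: algebra_simps)
      qed
      have "S k = (\<Sum>j = 0..Suc d. g j)" by (simp add: S_def g_def a)
      also have "\<dots> = g 0 + (\<Sum>j = 0..d. g (Suc j))"
        using sum.atLeast0_atMost_Suc_shift[of g d] by (simp only: comp_def)
      also have "(\<Sum>j = 0..d. g (Suc j)) = - (c * qint q (of_nat (m * Suc k) + r)) * S (Suc k)"
        unfolding gS S_def kn(2) by (simp only: sum_distrib_left)
      also have "g 0 = c * qW q m r (Suc n) (Suc k)" by (simp add: g_def c_def)
      finally have "S k = c * (qW q m r (Suc n) (Suc k) - qint q (of_nat (m * Suc k) + r) * qW q m r n (Suc k))"
        unfolding IH by (simp only: right_diff_distrib mult.assoc mult_minus_left diff_conv_add_uminus distrib_left mult_minus_right)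
      then show "qW q m r n k = S k" using qW_inv[of q m r n k] unfolding c_def by (metis)
    qed
  qed
  show ?thesis using main[of "n - k"] assms(4) unfolding S_def f_def by blast
qed

end
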